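(* Let $(Q,\cdot)$ be a quasigroup. If $Q$ satisfies $(xy)(zz)=(x(yz))z$ for all $x,y,z\in Q$ (LG2-quasigroup), then $Q$ is a right loop. If $Q$ satisfies $x(x(yz))=((xx)y)z$ for all $x,y,z\in Q$ (LC3-quasigroup), then $Q$ is a left loop.
   Context: A quasigroup is a set $Q$ with a binary operation $\cdot$ (written as juxtaposition) such that for all $a,b\in Q$ each of the equations $ax=b$ and $ya=b$ has a unique solution in $Q$. A quasigroup $Q$ is a left loop if there is $e\in Q$ with $ea=a$ for all $a\in Q$, and a right loop if there is $e\in Q$ with $ae=a$ for all $a\in Q$. *)

theory Defs
  imports Main
begin

definition quasigroup :: "'a set \<Rightarrow> ('a \<Rightarrow> 'a \<Rightarrow> 'a) \<Rightarrow> bool" where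
  "quasigroup Q m \<longleftrightarrow> Q \<noteq> {} \<and>
     (\<forall>a\<in>Q. \<forall>b\<in>Q. m a b \<in> Q) \<and>
     (\<forall>a\<in>Q. \<forall>b\<in>Q. \<exists>!x. x \<in> Q \<and> m a x = b) \<and>
     (\<forall>a\<in>Q. \<forall>b\<in>Q. \<exists>!y. y \<in> Q \<and> m y a = b)"

definition left_loop :: "'a set \<Rightarrow> ('a \<Rightarrow> 'a \<Rightarrow> 'a) \<Rightarrow> bool" where
  "left_loop Q m \<longleftrightarrow> quasigroup Q m \<and> (\<exists>e\<in>Q. \<forall>a\<in>Q. m e a = a)"

definition right_loop :: "'a set \<Rightarrow> ('a \<Rightarrow> 'a \<Rightarrow> 'a) \<Rightarrow> bool" where
  "right_loop Q m \<longleftrightarrow> quasigroup Q m \<and> (\<exists>e\<in>Q. \<forall>a\<in>Q. m a e = a)"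

end

theory Submission
  imports Defs
begin

lemma lg2_aux:
  fixes m ld rd :: "'a \<Rightarrow> 'a \<Rightarrow> 'a"
  assumes c0: "\<And>x y. x \<in> Q \<Longrightarrow> y \<in> Q \<Longrightarrow> m x y \<in> Q"
  and c1: "\<And>x y. x \<in> Q \<Longrightarrow> y \<in> Q \<Longrightarrow> ld x y \<in> Q"
  and c2: "\<And>x y. x \<in> Q \<Longrightarrow> y \<in> Q \<Longrightarrow> rd x y \<in> Q"
  and a1: "\<And>x y. x \<in> Q \<Longrightarrow> y \<in> Q \<Longrightarrow> m x (ld x y) = y" and a2: "\<And>x y. x \<in> Q \<Longrightarrow> y \<in> Q \<Longrightarrow> ld x (m x y) = y"
  and a3: "\<And>x y. x \<in> Q \<Longrightarrow> y \<in> Q \<Longrightarrow> m (rd y x) x = y" and a4: "\<And>x y. x \<in> Q \<Longrightarrow> y \<in> Q \<Longrightarrow> rd (m y x) x = y"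
  and L: "\<And>x y z. x \<in> Q \<Longrightarrow> y \<in> Q \<Longrightarrow> z \<in> Q \<Longrightarrow> m (m x y) (m z z) = m (m x (m y z)) z"
  and "a \<in> Q" "z \<in> Q"
  shows "m a (ld z z) = a"
  by (smt (verit) L a1 a2 a4 assms(10,9) c0 c1)

lemma lc3_aux:
  fixes m ld rd :: "'a \<Rightarrow> 'a \<Rightarrow> 'a"
  assumes c0: "\<And>x y. x \<in> Q \<Longrightarrow> y \<in> Q \<Longrightarrow> m x y \<in> Q"
  and c1: "\<And>x y. x \<in> Q \<Longrightarrow> y \<in> Q \<Longrightarrow> ld x y \<in> Q"
  and c2: "\<And>x y. x \<in> Q \<Longrightarrow> y \<in> Q \<Longrightarrow> rd x y \<in> Q"
  and a1: "\<And>x y. x \<in> Q \<Longrightarrow> y \<in> Q \<Longrightarrow> m x (ld x y) = y" and a2: "\<And>x y. x \<in> Q \<Longrightarrow> y \<in> Q \<Longrightarrow> ld x (m x y) = y"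
  and a3: "\<And>x y. x \<in> Q \<Longrightarrow> y \<in> Q \<Longrightarrow> m (rd y x) x = y" and a4: "\<And>x y. x \<in> Q \<Longrightarrow> y \<in> Q \<Longrightarrow> rd (m y x) x = y"
  and L: "\<And>x y z. x \<in> Q \<Longrightarrow> y \<in> Q \<Longrightarrow> z \<in> Q \<Longrightarrow> m x (m x (m y z)) = m (m (m x x) y) z"
  and "a \<in> Q" "z \<in> Q"
  shows "m (rd z z) a = a"
  by (smt (verit, ccfv_threshold) L a1 a2 a3 a4 assms(10,9) c0 c1 c2 imageE imageI)

theorem mainTheorem5:
  fixes Q :: "'a set" and m :: "'a \<Rightarrow> 'a \<Rightarrow> 'a"
  assumes "quasigroup Q m"
  shows "((\<forall>x\<in>Q. \<forall>y\<in>Q. \<forall>z\<in>Q. m (m x y) (m z z) = m (m x (m y z)) z) \<longrightarrow> right_loop Q m)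
       \<and> ((\<forall>x\<in>Q. \<forall>y\<in>Q. \<forall>z\<in>Q. m x (m x (m y z)) = m (m (m x x) y) z) \<longrightarrow> left_loop Q m)"
proof -
  define ld where "ld a b = (THE x. x \<in> Q \<and> m a x = b)" for a b
  define rd where "rd b a = (THE y. y \<in> Q \<and> m y a = b)" for a b
  have ne: "Q \<noteq> {}" and c0: "\<And>x y. x \<in> Q \<Longrightarrow> y \<in> Q \<Longrightarrow> m x y \<in> Q"
    and u1: "\<And>a b. a \<in> Q \<Longrightarrow> b \<in> Q \<Longrightarrow> \<exists>!x. x \<in> Q \<and> m a x = b"
    and u2: "\<And>a b. a \<in> Q \<Longrightarrow> b \<in> Q \<Longrightarrow> \<exists>!y. y \<in> Q \<and> m y a = b"
    using assms unfolding quasigroup_def by auto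
  have ld1: "ld a b \<in> Q \<and> m a (ld a b) = b" if "a \<in> Q" "b \<in> Q" for a b
    unfolding ld_def by (rule theI') (rule u1[OF that])
  have rd1: "rd b a \<in> Q \<and> m (rd b a) a = b" if "a \<in> Q" "b \<in> Q" for a b
    unfolding rd_def by (rule theI') (rule u2[OF that])
  have c1: "\<And>x y. x \<in> Q \<Longrightarrow> y \<in> Q \<Longrightarrow> ld x y \<in> Q" using ld1 by blast
  have c2: "\<And>x y. x \<in> Q \<Longrightarrow> y \<in> Q \<Longrightarrow> rd x y \<in> Q" using rd1 by blast
  have a1: "\<And>x y. x \<in> Q \<Longrightarrow> y \<in> Q \<Longrightarrow> m x (ld x y) = y" using ld1 by blast
  have a3: "\<And>x y. x \<in> Q \<Longrightarrow> y \<in> Q \<Longrightarrow> m (rd y x) x = y" using rd1 by blast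
  have a2: "\<And>x y. x \<in> Q \<Longrightarrow> y \<in> Q \<Longrightarrow> ld x (m x y) = y"
  proof -
    fix x y assume h: "x \<in> Q" "y \<in> Q"
    then have "m x y \<in> Q" using c0 by blast
    then show "ld x (m x y) = y" using u1[OF h(1) \<open>m x y \<in> Q\<close>] ld1[OF h(1) \<open>m x y \<in> Q\<close>] h by blast
  qed
  have a4: "\<And>x y. x \<in> Q \<Longrightarrow> y \<in> Q \<Longrightarrow> rd (m y x) x = y"
  proof -
    fix x y assume h: "x \<in> Q" "y \<in> Q"
    then have "m y x \<in> Q" using c0 by blast
    then show "rd (m y x) x = y" using u2[OF h(1) \<open>m y x \<in> Q\<close>] rd1[OF h(1) \<open>m y x \<in> Q\<close>] h by blast
  qed
  obtain z where z: "z \<in> Q" using ne by blast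
  show ?thesis
  proof (intro conjI impI)
    assume L: "\<forall>x\<in>Q. \<forall>y\<in>Q. \<forall>z\<in>Q. m (m x y) (m z z) = m (m x (m y z)) z"
    have "\<forall>a\<in>Q. m a (ld z z) = a"
      using lg2_aux[of Q m ld rd, OF c0 c1 c2 a1 a2 a3 a4] L z by blast
    then show "right_loop Q m" unfolding right_loop_def using assms c1 z by blast
  next
    assume L: "\<forall>x\<in>Q. \<forall>y\<in>Q. \<forall>z\<in>Q. m x (m x (m y z)) = m (m (m x x) y) z"
    have "\<forall>a\<in>Q. m (rd z z) a = a"
      using lc3_aux[of Q m ld rd, OF c0 c1 c2 a1 a2 a3 a4] L z by blast
    then show "left_loop Q m" unfolding left_loop_def using assms c2 z by blast
  qed
qed

end
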